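(* For any fixed $m$, any fixed $k<m$ and any fixed $\vec p\in(0,1)^m$, $$\Pr_{P\sim(\pi_{\vec p})^n}\big(\mathrm{top}_k(\vec p)\subseteq\mathrm{EJR{+}}(P)\big)=1-\exp(-\Omega(n)).$$
   Context: $\mathcal A=[m]$, $\mathcal A_k$ the $k$-subsets. Approval profile $P=(A_1,\dots,A_n)$, $A_j\subseteq\mathcal A$, drawn i.i.d. from $\pi_{\vec p}$, where $\Pr_{\pi_{\vec p}}(A)=\prod_{i\in A}p_i\prod_{i\notin A}(1-p_i)$. $\mathrm{top}_k(\vec p)$ is the set of $W\in\mathcal A_k$ with $p_i\ge p_j$ for all $i\in W$, $j\notin W$. $W\in\mathcal A_k$ is in $\mathrm{EJR{+}}(P)$ iff there are no $a\in\mathcal A\setminus W$, integer $\ell\ge1$ and set of voters $N'\subseteq[n]$ with $|N'|\ge\ell n/k$ such that every $j\in N'$ has $a\in A_j$ and $|A_j\cap W|<\ell$. Asymptotics as $n\to\infty$. *)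

theory Defs
  imports Complex_Main "HOL-Library.FuncSet"
begin

text \<open>Alternatives are {1..m}; voters are {0..<n}; a profile is a function
  from voters to approval sets.\<close>

definition alts :: "nat \<Rightarrow> nat set" where
  "alts m = {1..m}"

definition approval_prob :: "nat \<Rightarrow> (nat \<Rightarrow> real) \<Rightarrow> nat set \<Rightarrow> real" where
  "approval_prob m p X = (\<Prod>i\<in>alts m. if i \<in> X then p i else 1 - p i)"

definition top_k :: "nat \<Rightarrow> nat \<Rightarrow> (nat \<Rightarrow> real) \<Rightarrow> nat set set" where
  "top_k m k p = {W. W \<subseteq> alts m \<and> card W = k \<and>
      (\<forall>i\<in>W. \<forall>j\<in>alts m - W. p i \<ge> p j)}"

definition EJR_plus :: "nat \<Rightarrow> nat \<Rightarrow> nat \<Rightarrow> (nat \<Rightarrow> nat set) \<Rightarrow> nat set set" where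
  "EJR_plus m k n P = {W. W \<subseteq> alts m \<and> card W = k \<and>
      \<not> (\<exists>a\<in>alts m - W. \<exists>l::nat. l \<ge> 1 \<and> (\<exists>N' \<subseteq> {0..<n}.
            real (card N') \<ge> real l * real n / real k \<and>
            (\<forall>j\<in>N'. a \<in> P j \<and> card (P j \<inter> W) < l)))}"

definition prob_top_in_EJR :: "nat \<Rightarrow> nat \<Rightarrow> (nat \<Rightarrow> real) \<Rightarrow> nat \<Rightarrow> real" where
  "prob_top_in_EJR m k p n =
     (\<Sum>P\<in>{P \<in> PiE {0..<n} (\<lambda>_. Pow (alts m)). top_k m k p \<subseteq> EJR_plus m k n P}.
        \<Prod>j<n. approval_prob m p (P j))"

end

theory Submission
  imports Defs
begin

definition wt :: "nat set \<Rightarrow> (nat \<Rightarrow> real) \<Rightarrow> nat set \<Rightarrow> real" where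
  "wt I p B = (\<Prod>i\<in>I. if i \<in> B then p i else 1 - p i)"

definition mu :: "nat set \<Rightarrow> (nat \<Rightarrow> real) \<Rightarrow> (nat set \<Rightarrow> real) \<Rightarrow> real" where
  "mu I p f = (\<Sum>B\<in>Pow I. wt I p B * f B)"

lemma wt_nonneg: "\<forall>i\<in>I. 0 \<le> p i \<and> p i \<le> 1 \<Longrightarrow> 0 \<le> wt I p B"
  unfolding wt_def by (rule prod_nonneg) auto

lemma mu_decomp:
  assumes "finite J" "i \<notin> J"
  shows "mu (insert i J) p f = (\<Sum>B\<in>Pow J. wt J p B * (p i * f (insert i B) + (1 - p i) * f B))"
proof -
  have disj: "Pow J \<inter> insert i ` Pow J = {}" using assms by auto
  have inj: "inj_on (insert i) (Pow J)" using assms unfolding inj_on_def by (metis Diff_insert_absorb PowD in_mono)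
  have w1: "wt (insert i J) p B = (1 - p i) * wt J p B" if "B \<in> Pow J" for B
  proof -
    have "wt (insert i J) p B = (if i \<in> B then p i else 1 - p i) * wt J p B"
      unfolding wt_def using assms by simp
    then show ?thesis using that assms by auto
  qed
  have w2: "wt (insert i J) p (insert i B) = p i * wt J p B" if "B \<in> Pow J" for B
  proof -
    have "wt (insert i J) p (insert i B) = p i * (\<Prod>j\<in>J. if j \<in> insert i B then p j else 1 - p j)"
      unfolding wt_def using assms by simp
    also have "(\<Prod>j\<in>J. if j \<in> insert i B then p j else 1 - p j) = wt J p B"
      unfolding wt_def using assms by (intro prod.cong) auto
    finally show ?thesis .
  qed
  have "mu (insert i J) p f = (\<Sum>B\<in>Pow J. wt (insert i J) p B * f B) +
      (\<Sum>B\<in>insert i ` Pow J. wt (insert i J) p B * f B)"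
    unfolding mu_def Pow_insert using assms disj by (intro sum.union_disjoint) auto
  also have "(\<Sum>B\<in>insert i ` Pow J. wt (insert i J) p B * f B) =
      (\<Sum>B\<in>Pow J. wt (insert i J) p (insert i B) * f (insert i B))"
    using inj by (simp add: sum.reindex)
  also have "\<dots> = (\<Sum>B\<in>Pow J. wt J p B * (p i * f (insert i B)))"
    using w2 by (intro sum.cong) auto
  also have "(\<Sum>B\<in>Pow J. wt (insert i J) p B * f B) = (\<Sum>B\<in>Pow J. wt J p B * ((1 - p i) * f B))"
    using w1 by (intro sum.cong) auto
  finally show ?thesis by (simp add: sum.distrib[symmetric] algebra_simps)
qed

lemma mu_decomp':
  assumes "finite I" "i \<in> I"
  shows "mu I p f = (\<Sum>B\<in>Pow (I - {i}). wt (I - {i}) p B * (p i * f (insert i B) + (1 - p i) * f B))"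
proof -
  have "I = insert i (I - {i})" using assms by auto
  then have "mu I p f = mu (insert i (I - {i})) p f" by simp
  also have "\<dots> = (\<Sum>B\<in>Pow (I - {i}). wt (I - {i}) p B * (p i * f (insert i B) + (1 - p i) * f B))"
    using assms by (intro mu_decomp) auto
  finally show ?thesis .
qed

lemma mu_one: "finite I \<Longrightarrow> mu I p (\<lambda>_. 1) = 1"
proof (induction I rule: finite_induct)
  case empty
  then show ?case by (simp add: mu_def wt_def)
next
  case (insert i J)
  then have "mu (insert i J) p (\<lambda>_. 1) = (\<Sum>B\<in>Pow J. wt J p B * 1)"
    by (simp add: mu_decomp)
  then show ?case using insert by (simp add: mu_def)
qed

lemma mu_cong: "(\<And>B. B \<subseteq> I \<Longrightarrow> f B = g B) \<Longrightarrow> mu I p f = mu I p g"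
  unfolding mu_def by (intro sum.cong) auto

lemma mu_mono: "\<forall>i\<in>I. 0 \<le> p i \<and> p i \<le> 1 \<Longrightarrow> (\<And>B. B \<subseteq> I \<Longrightarrow> f B \<le> g B) \<Longrightarrow> mu I p f \<le> mu I p g"
  unfolding mu_def by (intro sum_mono mult_left_mono) (auto intro: wt_nonneg)

lemma mu_add: "mu I p (\<lambda>B. f B + g B) = mu I p f + mu I p g"
  unfolding mu_def by (simp add: sum.distrib distrib_left)

lemma mu_cmult: "mu I p (\<lambda>B. c * f B) = c * mu I p f"
  unfolding mu_def by (simp add: sum_distrib_left algebra_simps)

lemma mu_sum: "mu I p (\<lambda>B. \<Sum>i\<in>W. f i B) = (\<Sum>i\<in>W. mu I p (f i))"
  unfolding mu_def by (simp add: sum_distrib_left sum.swap[of _ W])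


lemma mu_pick:
  assumes "finite I" "i \<in> I"
  shows "mu I p (\<lambda>A. if i \<in> A then g (A - {i}) else 0) = p i * mu I p (\<lambda>A. g (A - {i}))"
proof -
  have "mu I p (\<lambda>A. if i \<in> A then g (A - {i}) else 0) = (\<Sum>B\<in>Pow (I - {i}). wt (I - {i}) p B * (p i * g B))"
    unfolding mu_decomp'[OF assms] by (intro sum.cong) auto
  moreover have "mu I p (\<lambda>A. g (A - {i})) = (\<Sum>B\<in>Pow (I - {i}). wt (I - {i}) p B * g B)"
    unfolding mu_decomp'[OF assms]
  proof (intro sum.cong refl)
    fix B assume "B \<in> Pow (I - {i})"
    then have "B - {i} = B" by auto
    then show "wt (I - {i}) p B * (p i * g (insert i B - {i}) + (1 - p i) * g (B - {i})) = wt (I - {i}) p B * g B"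
      using \<open>B \<in> Pow (I - {i})\<close> by (auto simp: algebra_simps)
  qed
  ultimately show ?thesis by (simp add: sum_distrib_left algebra_simps)
qed

lemma mu_pos_empty:
  assumes "finite I" "\<forall>i\<in>I. 0 < p i \<and> p i < 1" "\<And>B. B \<subseteq> I \<Longrightarrow> f B \<ge> 0" "f {} > 0"
  shows "mu I p f > 0"
proof -
  have w0: "wt I p {} > 0" unfolding wt_def using assms(2) by (intro prod_pos) auto
  have "wt I p {} * f {} \<le> mu I p f"
  proof -
    have wn: "\<And>B. 0 \<le> wt I p B" using wt_nonneg[of I p] assms(2) by (simp add: less_imp_le)
    show ?thesis unfolding mu_def using assms wn
    by (intro member_le_sum[where f="\<lambda>B. wt I p B * f B"]) (auto intro!: mult_nonneg_nonneg)
  qed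
  moreover have "wt I p {} * f {} > 0" using w0 assms(4) by simp
  ultimately show ?thesis by linarith
qed

lemma key:
  assumes fin: "finite I" and WI: "W \<subseteq> I" and aI: "a \<in> I" and aW: "a \<notin> W"
    and pr: "\<forall>i\<in>I. 0 < p i \<and> p i < 1" and pa: "\<forall>i\<in>W. p a \<le> p i"
    and cW: "card W = k" and k0: "0 < k" and l1: "1 \<le> l"
  shows "mu I p (\<lambda>A. if a \<in> A \<and> card (A \<inter> W) < l then 1 else 0) < real l / real k"
proof -
  have pr': "\<forall>i\<in>I. 0 \<le> p i \<and> p i \<le> 1" using pr by auto
  have finW: "finite W" using fin WI finite_subset by blast
  define h where "h A = (if card (A \<inter> W) < l then 1 else (0::real))" for A
  have h0: "0 \<le> mu I p h" using mu_mono[OF pr', of "\<lambda>_. 0" h] by (simp add: h_def mu_def)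
  have "mu I p (\<lambda>A. if a \<in> A \<and> card (A \<inter> W) < l then 1 else 0) =
        mu I p (\<lambda>A. if a \<in> A then h (A - {a}) else 0)"
  proof (intro mu_cong)
    fix B assume "B \<subseteq> I"
    have "(B - {a}) \<inter> W = B \<inter> W" using aW by auto
    then show "(if a \<in> B \<and> card (B \<inter> W) < l then 1 else 0) = (if a \<in> B then h (B - {a}) else 0)"
      by (simp add: h_def)
  qed
  also have "\<dots> = p a * mu I p (\<lambda>A. h (A - {a}))" using mu_pick[OF fin aI] .
  also have "mu I p (\<lambda>A. h (A - {a})) = mu I p h"
  proof (intro mu_cong)
    fix B assume "B \<subseteq> I"
    have "(B - {a}) \<inter> W = B \<inter> W" using aW by auto
    then show "h (B - {a}) = h B" by (simp add: h_def)
  qed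
  finally have Q: "mu I p (\<lambda>A. if a \<in> A \<and> card (A \<inter> W) < l then 1 else 0) = p a * mu I p h" .
  have "real k * (p a * mu I p h) = (\<Sum>i\<in>W. p a * mu I p h)" using cW by simp
  also have "\<dots> \<le> (\<Sum>i\<in>W. p i * mu I p h)"
    using pa h0 by (intro sum_mono mult_right_mono) auto
  also have "\<dots> \<le> (\<Sum>i\<in>W. p i * mu I p (\<lambda>A. h (A - {i})))"
  proof (intro sum_mono)
    fix i assume i: "i \<in> W"
    have "0 \<le> p i" using i WI pr by (auto simp: less_imp_le)
    moreover have "mu I p h \<le> mu I p (\<lambda>A. h (A - {i}))"
    proof (intro mu_mono[OF pr'])
      fix B assume B: "B \<subseteq> I"
      have "card ((B - {i}) \<inter> W) \<le> card (B \<inter> W)" using finW by (intro card_mono) auto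
      then show "h B \<le> h (B - {i})" by (simp add: h_def)
    qed
    ultimately show "p i * mu I p h \<le> p i * mu I p (\<lambda>A. h (A - {i}))" by (rule mult_left_mono[rotated])
  qed
  also have "\<dots> = (\<Sum>i\<in>W. mu I p (\<lambda>A. if i \<in> A then h (A - {i}) else 0))"
    using mu_pick[OF fin] WI by (intro sum.cong) auto
  also have "\<dots> = mu I p (\<lambda>A. \<Sum>i\<in>W. if i \<in> A then h (A - {i}) else 0)"
    by (rule mu_sum[symmetric])
  also have "\<dots> \<le> mu I p (\<lambda>A. real l * (1 - (if A \<inter> W = {} then 1 else 0)))"
  proof (intro mu_mono[OF pr'])
    fix B assume B: "B \<subseteq> I"
    define c where "c = card (B \<inter> W)"
    have fBW: "finite (B \<inter> W)" using finW by auto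
    have "(\<Sum>i\<in>W. if i \<in> B then h (B - {i}) else 0) = (\<Sum>i\<in>B \<inter> W. h (B - {i}))"
      using finW by (simp add: sum.If_cases Int_commute Int_def)
    also have "\<dots> = (\<Sum>i\<in>B \<inter> W. if c - 1 < l then 1 else 0)"
    proof (intro sum.cong refl)
      fix i assume i: "i \<in> B \<inter> W"
      have "(B - {i}) \<inter> W = (B \<inter> W) - {i}" by auto
      then have "card ((B - {i}) \<inter> W) = c - 1" using i fBW by (simp add: c_def)
      then show "h (B - {i}) = (if c - 1 < l then 1 else 0)" by (simp add: h_def)
    qed
    also have "\<dots> = real c * (if c - 1 < l then 1 else 0)" by (simp add: c_def)
    also have "\<dots> \<le> real l * (1 - (if B \<inter> W = {} then 1 else 0))"
    proof (cases "B \<inter> W = {}")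
      case True then show ?thesis by (simp add: c_def)
    next
      case False
      then have "c > 0" using fBW by (simp add: c_def card_gt_0_iff)
      then show ?thesis using False by auto
    qed
    finally show "(\<Sum>i\<in>W. if i \<in> B then h (B - {i}) else 0) \<le> real l * (1 - (if B \<inter> W = {} then 1 else 0))" .
  qed
  also have "\<dots> = real l * (1 - mu I p (\<lambda>A. if A \<inter> W = {} then 1 else 0))"
    using mu_cmult[of I p "real l" "\<lambda>A. 1 - (if A \<inter> W = {} then 1 else 0)"]
      mu_add[of I p "\<lambda>_. 1" "\<lambda>A. - (if A \<inter> W = {} then 1 else 0)"]
      mu_cmult[of I p "-1" "\<lambda>A. (if A \<inter> W = {} then 1 else 0)"] mu_one[OF fin, of p]
    by simp
  also have "\<dots> < real l"
  proof -
    have "mu I p (\<lambda>A. if A \<inter> W = {} then 1 else 0) > 0"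
      using fin pr by (intro mu_pos_empty) auto
    then show ?thesis using l1 by simp
  qed
  finally have "real k * (p a * mu I p h) < real l" .
  then have "p a * mu I p h < real l / real k" using k0 by (simp add: field_simps)
  then show ?thesis using Q by simp
qed


lemma sum_PiE_prod:
  fixes g :: "nat set \<Rightarrow> real"
  assumes "finite I"
  shows "(\<Sum>P\<in>PiE {..<n} (\<lambda>_. Pow I). \<Prod>j<n. g (P j)) = (\<Sum>A\<in>Pow I. g A) ^ n"
proof -
  have "(\<Prod>j\<in>{..<n}. \<Sum>A\<in>Pow I. g A) = (\<Sum>P\<in>PiE {..<n} (\<lambda>_. Pow I). \<Prod>j\<in>{..<n}. g (P j))"
    using prod_sum_PiE[of "{..<n}" "\<lambda>_. Pow I" "\<lambda>_. g"] assms by simp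
  then show ?thesis by simp
qed

lemma chernoff:
  assumes fin: "finite I" and pr': "\<forall>i\<in>I. 0 \<le> p i \<and> p i \<le> 1"
    and qt: "mu I p (\<lambda>A. if A \<in> S then 1 else 0) < t" and t0: "0 < t"
  shows "\<exists>r. 0 < r \<and> r < 1 \<and> (\<forall>n.
     (\<Sum>P\<in>{P\<in>PiE {..<n} (\<lambda>_. Pow I). t * real n \<le> real (card {j\<in>{..<n}. P j \<in> S})}.
        \<Prod>j<n. wt I p (P j)) \<le> r ^ n)"
proof -
  define q where "q = mu I p (\<lambda>A. if A \<in> S then 1 else 0)"
  have q0: "0 \<le> q" unfolding q_def using mu_mono[OF pr', of "\<lambda>_. 0" "\<lambda>A. if A \<in> S then 1 else 0"]
    by (simp add: mu_def)
  have qt': "q < t" using qt q_def by simp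
  define lam where "lam = 2 * t / (q + t)"
  have lam1: "1 < lam" unfolding lam_def using q0 qt' t0 by (simp add: field_simps)
  have qlam: "q * lam < t" unfolding lam_def using q0 qt' t0 by (simp add: field_simps)
  define u where "u = 1 + (lam - 1) * q"
  have u0: "0 < u" unfolding u_def using lam1 q0 by (simp add: add_pos_nonneg)
  define r where "r = u / lam powr t"
  have lp: "lam powr t > u"
  proof -
    have "ln (1 / lam) \<le> 1 / lam - 1" using lam1 by (intro ln_le_minus_one) simp
    then have ln1: "1 - 1 / lam \<le> ln lam" using lam1 by (simp add: ln_div)
    have "lam powr t = exp (t * ln lam)" using lam1 by (simp add: powr_def)
    also have "\<dots> \<ge> 1 + t * ln lam" by (rule exp_ge_add_one_self)
    finally have "lam powr t \<ge> 1 + t * (1 - 1 / lam)" using ln1 t0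
      by (smt (verit) mult_left_mono)
    moreover have "t * (1 - 1 / lam) > (lam - 1) * q"
    proof -
      have "t * (1 - 1 / lam) = (lam - 1) * (t / lam)" using lam1 by (simp add: field_simps)
      moreover have "t / lam > q" using qlam lam1 by (simp add: field_simps)
      moreover have "(lam - 1) * q < (lam - 1) * (t / lam)"
        using \<open>t / lam > q\<close> lam1 by (intro mult_strict_left_mono) auto
      ultimately show ?thesis by linarith
    qed
    ultimately show ?thesis unfolding u_def by linarith
  qed
  have lpt0: "lam powr t > 0" using u0 lp by linarith
  have r0: "0 < r" "r < 1" unfolding r_def using u0 lp lpt0 by (auto simp: field_simps)
  define g where "g A = wt I p A * (if A \<in> S then lam else 1)" for A
  have sumg: "(\<Sum>A\<in>Pow I. g A) = u"
  proof -
    have "(\<Sum>A\<in>Pow I. g A) = mu I p (\<lambda>A. 1 + (lam - 1) * (if A \<in> S then 1 else 0))"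
      unfolding mu_def g_def by (intro sum.cong) auto
    also have "\<dots> = u" unfolding u_def q_def
      using mu_add[of I p "\<lambda>_. 1" "\<lambda>A. (lam - 1) * (if A \<in> S then 1 else 0)"]
        mu_cmult[of I p "lam - 1" "\<lambda>A. if A \<in> S then 1 else 0"] mu_one[OF fin, of p] by simp
    finally show ?thesis .
  qed
  have wn: "\<And>B. 0 \<le> wt I p B" using wt_nonneg[of I p] pr' by simp
  show ?thesis
  proof (intro exI[of _ r] conjI allI r0(1) r0(2))
    fix n
    define E where "E = {P\<in>PiE {..<n} (\<lambda>_. Pow I). t * real n \<le> real (card {j\<in>{..<n}. P j \<in> S})}"
    have "(\<Sum>P\<in>E. \<Prod>j<n. wt I p (P j)) \<le> (\<Sum>P\<in>E. (\<Prod>j<n. g (P j)) / lam powr (t * n))"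
    proof (intro sum_mono)
      fix P assume P: "P \<in> E"
      define c where "c = card {j\<in>{..<n}. P j \<in> S}"
      have "(\<Prod>j<n. g (P j)) = (\<Prod>j<n. wt I p (P j)) * (\<Prod>j<n. if P j \<in> S then lam else 1)"
        unfolding g_def by (simp add: prod.distrib)
      also have "(\<Prod>j<n. if P j \<in> S then lam else 1) = lam ^ c"
        unfolding c_def by (simp add: prod.If_cases Int_def)
      finally have eq: "(\<Prod>j<n. g (P j)) = (\<Prod>j<n. wt I p (P j)) * lam ^ c" .
      have "lam powr (t * n) \<le> lam powr (real c)"
        using P lam1 unfolding E_def c_def by (intro powr_mono) (auto simp: mult.commute)
      also have "\<dots> = lam ^ c" using lam1 by (simp add: powr_realpow)
      finally have le: "lam powr (t * n) \<le> lam ^ c" .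
      have lpos: "lam powr (t * n) > 0" using lam1 by simp
      have w0: "0 \<le> (\<Prod>j<n. wt I p (P j))" using wn by (simp add: prod_nonneg)
      have "(\<Prod>j<n. wt I p (P j)) * lam powr (t * n) \<le> (\<Prod>j<n. wt I p (P j)) * lam ^ c"
        using le w0 by (rule mult_left_mono)
      then show "(\<Prod>j<n. wt I p (P j)) \<le> (\<Prod>j<n. g (P j)) / lam powr (t * n)"
        using lpos eq by (simp add: field_simps)
    qed
    also have "\<dots> \<le> (\<Sum>P\<in>PiE {..<n} (\<lambda>_. Pow I). (\<Prod>j<n. g (P j)) / lam powr (t * n))"
    proof (intro sum_mono2)
      show "finite (PiE {..<n} (\<lambda>_. Pow I))" using fin by (intro finite_PiE) auto
      show "E \<subseteq> PiE {..<n} (\<lambda>_. Pow I)" unfolding E_def by auto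
      fix P assume "P \<in> PiE {..<n} (\<lambda>_. Pow I) - E"
      show "0 \<le> (\<Prod>j<n. g (P j)) / lam powr (t * n)"
        using wn lam1 unfolding g_def by (intro divide_nonneg_nonneg prod_nonneg) auto
    qed
    also have "\<dots> = u ^ n / lam powr (t * n)"
      using sum_PiE_prod[OF fin, where n=n and g=g] sumg by (simp add: sum_divide_distrib[symmetric])
    also have "lam powr (t * n) = (lam powr t) ^ n"
      using lam1 by (simp add: powr_powr[symmetric] powr_realpow)
    also have "u ^ n / (lam powr t) ^ n = r ^ n" unfolding r_def by (simp add: power_divide)
    finally show "(\<Sum>P\<in>{P\<in>PiE {..<n} (\<lambda>_. Pow I). t * real n \<le> real (card {j\<in>{..<n}. P j \<in> S})}.
        \<Prod>j<n. wt I p (P j)) \<le> r ^ n" unfolding E_def .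
  qed
qed


definition St :: "nat set \<Rightarrow> nat \<Rightarrow> nat \<Rightarrow> nat set set" where
  "St W a l = {A. a \<in> A \<and> card (A \<inter> W) < l}"

definition Ev :: "nat set \<Rightarrow> nat \<Rightarrow> nat set \<Rightarrow> nat \<Rightarrow> nat \<Rightarrow> nat \<Rightarrow> (nat \<Rightarrow> nat set) set" where
  "Ev I k W a l n = {P\<in>PiE {..<n} (\<lambda>_. Pow I).
      real l / real k * real n \<le> real (card {j\<in>{..<n}. P j \<in> St W a l})}"

theorem theorem17:
  fixes m k :: nat and p :: "nat \<Rightarrow> real"
  assumes "0 < k" and "k < m"
    and "\<forall>i\<in>alts m. 0 < p i \<and> p i < 1"
  shows "\<exists>c>0. \<forall>\<^sub>F n in sequentially.
           1 - prob_top_in_EJR m k p n \<le> exp (- c * real n)"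
proof -
  define I where "I = alts m"
  have fin: "finite I" unfolding I_def alts_def by simp
  have pr: "\<forall>i\<in>I. 0 < p i \<and> p i < 1" using assms(3) I_def by simp
  have pr': "\<forall>i\<in>I. 0 \<le> p i \<and> p i \<le> 1" using pr by (auto simp: less_imp_le)
  have k0: "0 < k" by fact
  define T where "T = {(W, a, l). W \<in> top_k m k p \<and> a \<in> I - W \<and> l \<in> {1..k}}"
  have finT: "finite T"
  proof (rule finite_subset)
    show "T \<subseteq> Pow I \<times> I \<times> {1..k}" unfolding T_def top_k_def I_def by auto
    show "finite (Pow I \<times> I \<times> {1..k})" using fin by simp
  qed
  have "\<forall>\<tau>\<in>T. \<exists>r. 0 < r \<and> r < 1 \<and> (\<forall>n. (\<Sum>P\<in>Ev I k (fst \<tau>) (fst (snd \<tau>)) (snd (snd \<tau>)) n.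
        \<Prod>j<n. wt I p (P j)) \<le> r ^ n)"
  proof
    fix \<tau> assume "\<tau> \<in> T"
    then obtain W a l where tau: "\<tau> = (W, a, l)" and W: "W \<in> top_k m k p" and a: "a \<in> I - W"
      and l: "l \<in> {1..k}" unfolding T_def by auto
    have WI: "W \<subseteq> I" and cW: "card W = k" and pW: "\<forall>i\<in>W. p a \<le> p i"
      using W a unfolding top_k_def I_def by auto
    have "mu I p (\<lambda>A. if a \<in> A \<and> card (A \<inter> W) < l then 1 else 0) < real l / real k"
      using key[OF fin WI _ _ pr pW cW k0] a l by auto
    then have q: "mu I p (\<lambda>A. if A \<in> St W a l then 1 else 0) < real l / real k"
      unfolding St_def by simp
    have "0 < real l / real k" using l k0 by simp
    from chernoff[OF fin pr' q this] obtain r where "0 < r" "r < 1" and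
      "\<forall>n. (\<Sum>P\<in>{P\<in>PiE {..<n} (\<lambda>_. Pow I). real l / real k * real n \<le> real (card {j\<in>{..<n}. P j \<in> St W a l})}.
        \<Prod>j<n. wt I p (P j)) \<le> r ^ n" by blast
    then show "\<exists>r. 0 < r \<and> r < 1 \<and> (\<forall>n. (\<Sum>P\<in>Ev I k (fst \<tau>) (fst (snd \<tau>)) (snd (snd \<tau>)) n.
        \<Prod>j<n. wt I p (P j)) \<le> r ^ n)"
      unfolding tau Ev_def by auto
  qed
  then obtain R where R: "\<And>\<tau>. \<tau> \<in> T \<Longrightarrow> 0 < R \<tau> \<and> R \<tau> < 1 \<and> (\<forall>n. (\<Sum>P\<in>Ev I k (fst \<tau>) (fst (snd \<tau>)) (snd (snd \<tau>)) n.
        \<Prod>j<n. wt I p (P j)) \<le> R \<tau> ^ n)"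
    by metis
  define Rm where "Rm = Max (insert (1/2) (R ` T))"
  have Rm_ge: "R \<tau> \<le> Rm" if "\<tau> \<in> T" for \<tau> unfolding Rm_def using finT that by (intro Max_ge) auto
  have Rm0: "0 < Rm" unfolding Rm_def using finT by (meson Max_ge finite_imageI finite_insert insertI1 less_le_trans zero_less_divide_1_iff zero_less_numeral)
  have Rm1: "Rm < 1" unfolding Rm_def using finT R by (subst Max_less_iff) auto
  have bound: "1 - prob_top_in_EJR m k p n \<le> real (card T) * Rm ^ n" if n1: "1 \<le> n" for n
  proof -
    define PS where "PS = PiE {..<n} (\<lambda>_. Pow I)"
    define w where "w P = (\<Prod>j<n. wt I p (P j))" for P :: "nat \<Rightarrow> nat set"
    define G where "G = {P\<in>PS. top_k m k p \<subseteq> EJR_plus m k n P}"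
    define EE where "EE \<tau> = Ev I k (fst \<tau>) (fst (snd \<tau>)) (snd (snd \<tau>)) n" for \<tau>
    have wn: "\<And>B. 0 \<le> wt I p B" using wt_nonneg[of I p] pr' by simp
    have w0: "0 \<le> w P" for P unfolding w_def using wn by (simp add: prod_nonneg)
    have finPS: "finite PS" unfolding PS_def using fin by (intro finite_PiE) auto
    have "{0..<n} = {..<n}" by auto
    then have prob_eq: "prob_top_in_EJR m k p n = (\<Sum>P\<in>G. w P)"
      unfolding prob_top_in_EJR_def G_def PS_def w_def approval_prob_def wt_def I_def by simp
    have tot: "(\<Sum>P\<in>PS. w P) = 1"
      unfolding PS_def w_def sum_PiE_prod[OF fin, where n=n and g="wt I p"]
      using mu_one[OF fin, of p] by (simp add: mu_def)
    have "1 - prob_top_in_EJR m k p n = (\<Sum>P\<in>PS - G. w P)"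
      using prob_eq tot finPS by (subst sum_diff) (auto simp: G_def)
    also have "\<dots> \<le> (\<Sum>P\<in>PS - G. \<Sum>\<tau>\<in>T. if P \<in> EE \<tau> then w P else 0)"
    proof (intro sum_mono)
      fix P assume P: "P \<in> PS - G"
      then obtain W where W: "W \<in> top_k m k p" and nW: "W \<notin> EJR_plus m k n P"
        unfolding G_def by auto
      have WI: "W \<subseteq> I" and cW: "card W = k" using W unfolding top_k_def I_def by auto
      then obtain a l N' where a: "a \<in> I - W" and l: "l \<ge> 1" and N': "N' \<subseteq> {0..<n}"
        and cN: "real (card N') \<ge> real l * real n / real k"
        and Nj: "\<forall>j\<in>N'. a \<in> P j \<and> card (P j \<inter> W) < l"
        using nW W unfolding EJR_plus_def top_k_def I_def by auto
      have "card N' \<le> n" using N' by (metis card_atLeastLessThan card_mono finite_atLeastLessThan minus_nat.diff_0)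
      then have lk: "l \<le> k"
      proof -
        have "real l * real n / real k \<le> real n" using cN \<open>card N' \<le> n\<close> by linarith
        then have "real l * real n \<le> real k * real n" using k0 by (simp add: field_simps)
        then have "real l \<le> real k" using n1 by simp
        then show ?thesis by simp
      qed
      have tau: "(W, a, l) \<in> T" unfolding T_def using W a l lk by auto
      have "N' \<subseteq> {j\<in>{..<n}. P j \<in> St W a l}" using N' Nj unfolding St_def by auto
      then have "card N' \<le> card {j\<in>{..<n}. P j \<in> St W a l}" by (intro card_mono) auto
      then have "P \<in> EE (W, a, l)" using P cN unfolding EE_def Ev_def PS_def by (auto simp: field_simps)
      then have "w P = (\<lambda>\<tau>. if P \<in> EE \<tau> then w P else 0) (W, a, l)" by simp
      also have "\<dots> \<le> (\<Sum>\<tau>\<in>T. if P \<in> EE \<tau> then w P else 0)"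
        using finT tau w0 by (intro member_le_sum) auto
      finally show "w P \<le> (\<Sum>\<tau>\<in>T. if P \<in> EE \<tau> then w P else 0)" .
    qed
    also have "\<dots> = (\<Sum>\<tau>\<in>T. \<Sum>P\<in>PS - G. if P \<in> EE \<tau> then w P else 0)" by (rule sum.swap)
    also have "\<dots> \<le> (\<Sum>\<tau>\<in>T. \<Sum>P\<in>PS. if P \<in> EE \<tau> then w P else 0)"
      using finPS w0 by (intro sum_mono sum_mono2) auto
    also have "\<dots> = (\<Sum>\<tau>\<in>T. \<Sum>P\<in>EE \<tau>. w P)"
    proof (rule sum.cong[OF refl])
      fix \<tau> assume "\<tau> \<in> T"
      have "EE \<tau> = {P\<in>PS. P \<in> EE \<tau>}" unfolding EE_def Ev_def PS_def by auto
      then show "(\<Sum>P\<in>PS. if P \<in> EE \<tau> then w P else 0) = (\<Sum>P\<in>EE \<tau>. w P)"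
        using finPS sum.inter_filter[OF finPS, of w "\<lambda>P. P \<in> EE \<tau>"] by simp
    qed
    also have "\<dots> \<le> (\<Sum>\<tau>\<in>T. Rm ^ n)"
    proof (intro sum_mono)
      fix \<tau> assume t: "\<tau> \<in> T"
      have "(\<Sum>P\<in>EE \<tau>. w P) \<le> R \<tau> ^ n" using R[OF t] unfolding EE_def w_def by blast
      also have "\<dots> \<le> Rm ^ n" using R[OF t] Rm_ge[OF t] by (intro power_mono) auto
      finally show "(\<Sum>P\<in>EE \<tau>. w P) \<le> Rm ^ n" .
    qed
    also have "\<dots> = real (card T) * Rm ^ n" by simp
    finally show ?thesis .
  qed
  define c where "c = - ln Rm / 2"
  have c0: "c > 0" unfolding c_def using Rm0 Rm1 by simp
  define s where "s = exp (- c)"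
  have s0: "0 < s" and s1: "s < 1" unfolding s_def using c0 by auto
  have s2: "s ^ 2 = Rm" unfolding s_def c_def using Rm0
    by (simp add: power2_eq_square exp_add[symmetric])
  have "(\<lambda>n. s ^ n) \<longlonglongrightarrow> 0" using s0 s1 by (intro LIMSEQ_power_zero) auto
  then have "\<forall>\<^sub>F n in sequentially. s ^ n < 1 / (real (card T) + 1)"
    by (rule order_tendstoD) simp
  then have ev: "\<forall>\<^sub>F n in sequentially. s ^ n < 1 / (real (card T) + 1) \<and> 1 \<le> n"
    using eventually_ge_at_top[of 1] by eventually_elim auto
  show ?thesis
  proof (intro exI[of _ c] conjI c0)
    show "\<forall>\<^sub>F n in sequentially. 1 - prob_top_in_EJR m k p n \<le> exp (- c * real n)"
      using ev
    proof eventually_elim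
      case (elim n)
      have e: "exp (- c * real n) = s ^ n" unfolding s_def by (simp add: exp_of_nat_mult[symmetric] mult.commute)
      have "real (card T) * s ^ n \<le> 1"
      proof -
        have "real (card T) * s ^ n \<le> (real (card T) + 1) * s ^ n" using s0 by simp
        also have "\<dots> \<le> 1" using elim by (simp add: field_simps)
        finally show ?thesis .
      qed
      then have "real (card T) * s ^ n * s ^ n \<le> s ^ n" using s0 by (simp add: mult_left_le_one_le mult.commute)
      moreover have "Rm ^ n = s ^ n * s ^ n" using s2 by (simp add: power_mult_distrib[symmetric] power2_eq_square)
      ultimately show ?case using bound[of n] elim e by (simp add: mult.assoc)
    qed
  qed
qed

end
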